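(* Let $\mu$ be a probability measure on $\mathbb R$ with bounded support and let $b=\sup\operatorname{supp}\mu$. Then the map $\Phi:(b,\infty)\to\mathbb R$, $\Phi(x)=\dfrac{G_\mu(x)^2}{G_\mu'(x)}$, is continuous, nonincreasing, and takes values in $[-1,0]$.
   Context: $G_\mu(z)=\int\frac{1}{z-t}\,d\mu(t)$ is the Cauchy transform of $\mu$ for $z\notin\operatorname{supp}\mu$, and $G_\mu'$ denotes its derivative. *)

theory Defs
  imports "HOL-Probability.Probability"
begin

definition measure_support :: "real measure \<Rightarrow> real set" where
  "measure_support M = {x. \<forall>U. open U \<and> x \<in> U \<longrightarrow> emeasure M U > 0}"

definition cauchy_transform :: "real measure \<Rightarrow> real \<Rightarrow> real" where
  "cauchy_transform M z = (LINT t|M. 1 / (z - t))"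

end

theory Submission
  imports Defs
begin



lemma alg1:
  fixes u v d :: real
  assumes "d > 0" "u \<ge> d" "v \<ge> d"
  shows "\<bar>1/v - 1/u - (-(1/u^2)) * (v - u)\<bar> \<le> (1/d^3) * (v - u)^2"
proof -
  have "1/v - 1/u - (-(1/u^2)) * (v - u) = (v-u)^2 / (u^2 * v)"
    using assms by (simp add: field_simps power2_eq_square)
  moreover have "d^3 \<le> u^2 * v"
  proof -
    have "d^2 \<le> u^2" using assms by (intro power_mono) auto
    hence "d^2 * d \<le> u^2 * v" using assms by (intro mult_mono) auto
    thus ?thesis by (simp add: power3_eq_cube power2_eq_square)
  qed
  ultimately show ?thesis using assms
  proof -
    assume e: "1/v - 1/u - (-(1/u^2)) * (v - u) = (v-u)^2 / (u^2 * v)" and dd: "d^3 \<le> u^2 * v"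
    have "1/(u^2 * v) \<le> 1/d^3" using dd assms by (intro divide_left_mono) auto
    hence "(v-u)^2 * (1/(u^2 * v)) \<le> (v-u)^2 * (1/d^3)" by (intro mult_left_mono) auto
    moreover have "0 \<le> (v-u)^2 / (u^2 * v)" using assms by auto
    ultimately show ?thesis using e by (simp add: mult.commute)
  qed
qed

lemma alg2:
  fixes u v d :: real
  assumes "d > 0" "u \<ge> d" "v \<ge> d"
  shows "\<bar>1/v^2 - 1/u^2 - (-(2*(1/u^3))) * (v - u)\<bar> \<le> (3/d^4) * (v - u)^2"
proof -
  have e: "1/v^2 - 1/u^2 - (-(2*(1/u^3))) * (v - u) = (v-u)^2 * (2/(u^3 * v) + 1/(u^2 * v^2))"
    using assms by (simp add: field_simps power2_eq_square power3_eq_cube)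
  have d3: "d^3 \<le> u^3" using assms by (intro power_mono) auto
  have d2: "d^2 \<le> u^2" "d^2 \<le> v^2" using assms by (intro power_mono, auto)+
  have "d^3 * d \<le> u^3 * v" using assms d3 by (intro mult_mono) auto
  hence a: "2/(u^3 * v) \<le> 2/d^4" using assms by (intro divide_left_mono) (auto simp: power_def)
  have "d^2 * d^2 \<le> u^2 * v^2" using assms d2 by (intro mult_mono) auto
  hence b: "1/(u^2 * v^2) \<le> 1/d^4" using assms by (intro divide_left_mono) (auto simp: power_def)
  have "0 \<le> 2/(u^3 * v) + 1/(u^2 * v^2)" using assms by auto
  then have "\<bar>(v-u)^2 * (2/(u^3 * v) + 1/(u^2 * v^2))\<bar> = (v-u)^2 * (2/(u^3 * v) + 1/(u^2 * v^2))"
    by simp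
  also have "\<dots> \<le> (v-u)^2 * (3/d^4)" using a b by (intro mult_left_mono) auto
  finally show ?thesis using e by (simp add: mult.commute)
qed




context real_distribution begin

lemma cdf_Sup_support:
  assumes bnd: "bounded (measure_support M)"
  shows "cdf M (Sup (measure_support M)) = 1"
proof (rule ccontr)
  define S where "S = measure_support M"
  define b where "b = Sup S"
  assume "cdf M (Sup (measure_support M)) \<noteq> 1"
  hence lt: "cdf M b < 1" using cdf_bounded_prob[of b] unfolding b_def S_def by linarith
  have "eventually (\<lambda>s. cdf M s < 1) (at_right b)"
    using cdf_is_right_cont[of b] lt unfolding continuous_within
    by (intro order_tendstoD(2)) auto
  then obtain b' where b': "b' > b" "\<And>y. y > b \<Longrightarrow> y < b' \<Longrightarrow> cdf M y < 1"
    unfolding eventually_at_right_field by blast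
  define d where "d = (b + b')/2"
  have d: "d > b" "cdf M d < 1" using b' unfolding d_def by auto
  define \<theta> where "\<theta> = (1 + cdf M d) / 2"
  have th: "cdf M d < \<theta>" "\<theta> < 1" using d unfolding \<theta>_def by auto
  define T where "T = {s. cdf M s \<le> \<theta>}"
  have "eventually (\<lambda>s. cdf M s > \<theta>) at_top"
    using cdf_lim_at_top_prob th by (intro order_tendstoD(1)) auto
  then obtain N where N: "\<And>s. s \<ge> N \<Longrightarrow> cdf M s > \<theta>"
    by (auto simp: eventually_at_top_linorder)
  have bddT: "bdd_above T"
    unfolding bdd_above_def T_def
  proof (intro exI ballI)
    fix s assume "s \<in> {s. cdf M s \<le> \<theta>}"
    thus "s \<le> N" using N[of s] by force
  qed
  have dT: "d \<in> T" using th unfolding T_def by auto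
  define c where "c = Sup T"
  have cd: "d \<le> c" unfolding c_def by (rule cSup_upper[OF dT bddT])
  have cS: "c \<in> S"
    unfolding S_def measure_support_def
  proof (intro CollectI allI impI, elim conjE)
    fix U :: "real set" assume "open U" "c \<in> U"
    then obtain e where e: "e > 0" "ball c e \<subseteq> U" by (auto simp: open_contains_ball)
    have "c - e < Sup T" using e unfolding c_def by auto
    then obtain s' where s': "s' \<in> T" "c - e < s'" using less_cSup_iff[OF _ bddT, of "c-e"] dT by auto
    have "cdf M (c - e) \<le> \<theta>" using s' cdf_nondecreasing[of "c-e" s'] unfolding T_def by auto
    moreover have "c + e/2 \<notin> T"
    proof
      assume "c + e/2 \<in> T"
      hence "c + e/2 \<le> c" unfolding c_def using bddT by (rule cSup_upper)
      thus False using e by auto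
    qed
    hence "cdf M (c + e/2) > \<theta>" unfolding T_def by auto
    ultimately have pos: "measure M {c - e<..c + e/2} > 0"
      using cdf_diff_eq[of "c-e" "c+e/2"] e by auto
    have sub: "{c - e<..c + e/2} \<subseteq> U"
    proof
      fix x assume "x \<in> {c - e<..c + e/2}"
      hence "x \<in> ball c e" using e(1) by (auto simp: dist_real_def)
      thus "x \<in> U" using e(2) by auto
    qed
    have "emeasure M {c - e<..c + e/2} \<le> emeasure M U"
      using sub \<open>open U\<close> by (intro emeasure_mono) auto
    moreover have "emeasure M {c - e<..c + e/2} > 0"
      using pos by (simp add: emeasure_eq_measure)
    ultimately show "emeasure M U > 0" by auto
  qed
  have "c \<le> b" unfolding b_def using bounded_imp_bdd_above[OF bnd[folded S_def]] cS
    by (intro cSup_upper)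
  thus False using cd d by auto
qed

lemma AE_le_Sup:
  assumes bnd: "bounded (measure_support M)"
  shows "AE t in M. t \<le> Sup (measure_support M)"
proof -
  define b where "b = Sup (measure_support M)"
  have "prob {b<..} = 1 - prob {..b}"
    using prob_compl[of "{..b}"] by (simp add: Compl_eq_Diff_UNIV[symmetric] Compl_atMost)
  also have "\<dots> = 0" using cdf_Sup_support[OF bnd] unfolding b_def cdf_def by simp
  finally have "emeasure M {b<..} = 0" by (simp add: emeasure_eq_measure)
  hence "AE t in M. t \<le> b" by (intro AE_I[where N="{b<..}"]) auto
  thus ?thesis unfolding b_def .
qed

end

context real_distribution begin

lemma int_pow:
  assumes ae: "AE t in M. t \<le> b" and "b < y"
  shows "integrable M (\<lambda>t. (1/(y-t))^n)"
proof (rule integrable_const_bound[where B="(1/(y-b))^n"])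
  show "AE t in M. norm ((1/(y-t))^n) \<le> (1/(y-b))^n"
    using ae
  proof (rule AE_mp, intro AE_I2 impI)
    fix t assume "t \<le> b"
    hence "1/(y-t) \<le> 1/(y-b)" "0 \<le> 1/(y-t)" using \<open>b < y\<close> by (auto intro!: divide_left_mono)
    thus "norm ((1/(y-t))^n) \<le> (1/(y-b))^n" by (auto simp: power_abs intro!: power_mono)
  qed
qed measurable

lemma int_pos:
  assumes ae: "AE t in M. t \<le> b" and "b < y"
  shows "0 < (\<integral>t. (1/(y-t))^n \<partial>M)"
proof -
  have nn: "AE t in M. 0 \<le> (1/(y-t))^n"
    using ae by eventually_elim (use \<open>b<y\<close> in auto)
  have "(\<integral>t. (1/(y-t))^n \<partial>M) \<noteq> 0"
  proof
    assume "(\<integral>t. (1/(y-t))^n \<partial>M) = 0"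
    hence "AE t in M. (1/(y-t))^n = 0"
      using integral_nonneg_eq_0_iff_AE[OF int_pow[OF ae \<open>b<y\<close>] nn] by simp
    hence "AE t in M. False" using ae by eventually_elim (use \<open>b<y\<close> in auto)
    thus False by (simp add: AE_False)
  qed
  moreover have "0 \<le> (\<integral>t. (1/(y-t))^n \<partial>M)" using nn by (rule integral_nonneg_AE)
  ultimately show ?thesis by linarith
qed

lemma quad:
  assumes ae: "AE t in M. t \<le> b" and "b < y"
  defines "I \<equiv> \<lambda>n. (\<integral>t. (1/(y-t))^n \<partial>M)"
  shows "0 \<le> I (w+2) - 2*l*I (w+1) + l^2 * I w"
proof -
  have i: "\<And>n. integrable M (\<lambda>t. (1/(y-t))^n)" using int_pow[OF ae \<open>b<y\<close>] .
  have "0 \<le> (\<integral>t. (1/(y-t))^w * (1/(y-t) - l)^2 \<partial>M)"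
    using ae by (intro integral_nonneg_AE, eventually_elim) (use \<open>b<y\<close> in auto)
  also have "\<dots> = (\<integral>t. ((1/(y-t))^(w+2) - 2*l*(1/(y-t))^(w+1)) + l^2*(1/(y-t))^w \<partial>M)"
    by (intro Bochner_Integration.integral_cong refl) (simp add: power2_eq_square algebra_simps)
  also have "\<dots> = (\<integral>t. (1/(y-t))^(w+2) - 2*l*(1/(y-t))^(w+1) \<partial>M) + (\<integral>t. l^2*(1/(y-t))^w \<partial>M)"
  proof -
    have a: "integrable M (\<lambda>t. 2*l*(1/(y-t))^(w+1))" by (rule integrable_mult_right) (rule i)
    have b: "integrable M (\<lambda>t. l^2*(1/(y-t))^w)" by (rule integrable_mult_right) (rule i)
    show ?thesis by (rule Bochner_Integration.integral_add[OF Bochner_Integration.integrable_diff[OF i a] b])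
  qed
  also have "(\<integral>t. (1/(y-t))^(w+2) - 2*l*(1/(y-t))^(w+1) \<partial>M) = I (w+2) - (\<integral>t. 2*l*(1/(y-t))^(w+1) \<partial>M)"
  proof -
    have a: "integrable M (\<lambda>t. 2*l*(1/(y-t))^(w+1))" by (rule integrable_mult_right) (rule i)
    show ?thesis unfolding I_def by (rule Bochner_Integration.integral_diff[OF i a])
  qed
  also have "(\<integral>t. 2*l*(1/(y-t))^(w+1) \<partial>M) = 2*l*I (w+1)" unfolding I_def by (rule integral_mult_right_zero)
  also have "(\<integral>t. l^2*(1/(y-t))^w \<partial>M) = l^2 * I w" unfolding I_def by simp
  finally show ?thesis .
qed

lemma deriv_int:
  assumes ae: "AE t in M. t \<le> b" and "b < x" and "0 < \<delta>"
    and meas: "\<And>y. (\<lambda>t. k y t) \<in> borel_measurable M"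
    and ik: "\<And>y. \<bar>y - x\<bar> < \<delta> \<Longrightarrow> integrable M (k y)"
    and ik': "integrable M k'"
    and bound: "\<And>y t. \<bar>y - x\<bar> < \<delta> \<Longrightarrow> t \<le> b \<Longrightarrow> \<bar>k y t - k x t - k' t * (y - x)\<bar> \<le> C * (y - x)^2"
  shows "((\<lambda>y. \<integral>t. k y t \<partial>M) has_field_derivative (\<integral>t. k' t \<partial>M)) (at x)"
  unfolding DERIV_def
proof -
  let ?F = "\<lambda>y. \<integral>t. k y t \<partial>M"
  let ?D = "\<integral>t. k' t \<partial>M"
  have "((\<lambda>h. (?F (x + h) - ?F x) / h - ?D) \<longlongrightarrow> 0) (at 0)"
  proof (rule Lim_null_comparison)
    show "((\<lambda>h. \<bar>C\<bar> * \<bar>h\<bar>) \<longlongrightarrow> 0) (at 0)"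
      by (auto intro!: tendsto_eq_intros)
    have "eventually (\<lambda>h. h \<noteq> 0 \<and> \<bar>h\<bar> < \<delta>) (at (0::real))"
      unfolding eventually_at using \<open>0<\<delta>\<close> by (intro exI[of _ \<delta>]) (auto simp: dist_real_def)
    thus "eventually (\<lambda>h. norm ((?F (x + h) - ?F x) / h - ?D) \<le> \<bar>C\<bar> * \<bar>h\<bar>) (at 0)"
    proof eventually_elim
      case (elim h)
      have ih: "integrable M (k (x+h))" using ik elim by auto
      have ix: "integrable M (k x)" using ik \<open>0<\<delta>\<close> by auto
      have "?F (x + h) - ?F x - ?D * h = (\<integral>t. k (x+h) t - k x t - k' t * h \<partial>M)"
        proof -
        have "(\<integral>t. k (x+h) t - k x t - k' t * h \<partial>M) = (\<integral>t. k (x+h) t - k x t \<partial>M) - (\<integral>t. k' t * h \<partial>M)"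
          by (rule Bochner_Integration.integral_diff) (use ih ix ik' in auto)
        also have "(\<integral>t. k (x+h) t - k x t \<partial>M) = ?F (x+h) - ?F x"
          by (rule Bochner_Integration.integral_diff) (use ih ix in auto)
        finally show ?thesis by simp
      qed
      also have "norm \<dots> \<le> (\<integral>t. norm (k (x+h) t - k x t - k' t * h) \<partial>M)"
        by (rule integral_norm_bound)
      also have "\<dots> \<le> (\<integral>t. C * h^2 \<partial>M)"
      proof (rule integral_mono_AE)
        show "integrable M (\<lambda>t. norm (k (x+h) t - k x t - k' t * h))"
          using ih ix ik' by (intro integrable_norm integrable_diff integrable_mult_left) auto
        show "AE t in M. norm (k (x+h) t - k x t - k' t * h) \<le> C * h^2"
          using ae by eventually_elim (use bound[of "x+h"] elim in auto)
      qed simp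
      also have "\<dots> = C * h^2" using prob_space by simp
      finally have *: "\<bar>?F (x + h) - ?F x - ?D * h\<bar> \<le> C * h^2" by simp
      have "(?F (x + h) - ?F x) / h - ?D = (?F (x + h) - ?F x - ?D * h) / h"
        using elim by (simp add: field_simps)
      also have "\<bar>\<dots>\<bar> \<le> C * h^2 / \<bar>h\<bar>" using * elim by (simp add: abs_divide divide_right_mono)
      also have "\<dots> = C * \<bar>h\<bar>"
      proof -
        have g: "\<And>a::real. a \<noteq> 0 \<Longrightarrow> C*a^2/a = C*a" by (simp add: power2_eq_square)
        show ?thesis using g[of "\<bar>h\<bar>"] elim by simp
      qed
      also have "\<dots> \<le> \<bar>C\<bar> * \<bar>h\<bar>" by (intro mult_right_mono) auto
      finally show ?case by simp
    qed
  qed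
  thus "(\<lambda>h. (?F (x + h) - ?F x) / h) \<midarrow>0\<rightarrow> ?D" by (simp add: Lim_null[symmetric])
qed

end



theorem mainTheorem5:
  fixes M :: "real measure"
  assumes "prob_space M"
    and "sets M = sets borel"
    and "bounded (measure_support M)"
  defines "b \<equiv> Sup (measure_support M)"
    and "\<Phi> \<equiv> (\<lambda>x. (cauchy_transform M x)\<^sup>2 / deriv (cauchy_transform M) x)"
  shows "continuous_on {b<..} \<Phi>
         \<and> (\<forall>x\<in>{b<..}. \<forall>y\<in>{b<..}. x \<le> y \<longrightarrow> \<Phi> y \<le> \<Phi> x)
         \<and> (\<forall>x\<in>{b<..}. \<Phi> x \<in> {-1..0})"
proof -
  interpret real_distribution M
    using assms(1,2) by (simp add: real_distribution_def real_distribution_axioms_def)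
  have ae: "AE t in M. t \<le> b" using AE_le_Sup[OF assms(3)] unfolding b_def .
  define G where "G = cauchy_transform M"
  define H where "H = (\<lambda>y. \<integral>t. 1/(y-t)^2 \<partial>M)"
  define K where "K = (\<lambda>y. \<integral>t. 1/(y-t)^3 \<partial>M)"
  have I1: "G y = (\<integral>t. (1/(y-t))^1 \<partial>M)" for y unfolding G_def cauchy_transform_def by simp
  have I2: "H y = (\<integral>t. (1/(y-t))^2 \<partial>M)" for y unfolding H_def by (simp add: power_one_over)
  have I3: "K y = (\<integral>t. (1/(y-t))^3 \<partial>M)" for y unfolding K_def by (simp add: power_one_over)
  have I0: "(\<integral>t. (1/(y-t))^0 \<partial>M) = 1" for y using prob_space by simp
  have Gpos: "0 < G y" if "b < y" for y unfolding I1 using int_pos[OF ae that] .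
  have Hpos: "0 < H y" if "b < y" for y unfolding I2 using int_pos[OF ae that] .
  have CS1: "G y ^ 2 \<le> H y" if "b < y" for y
  proof -
    have "0 \<le> (\<integral>t. (1/(y-t))^2 \<partial>M) - 2 * G y * (\<integral>t. (1/(y-t))^1 \<partial>M) + (G y)^2 * (\<integral>t. (1/(y-t))^0 \<partial>M)"
      using quad[OF ae that, of 0 "G y"] by (simp only: add_0_left)
    hence "0 \<le> H y - 2 * G y * G y + (G y)^2" unfolding I0 I1[symmetric] I2[symmetric] by simp
    thus ?thesis by (simp add: power2_eq_square)
  qed
  have CS2: "H y ^ 2 \<le> G y * K y" if "b < y" for y
  proof -
    have "0 \<le> K y - 2 * (H y / G y) * H y + (H y / G y)^2 * G y"
    proof -
      have e: "(1::nat)+2 = 3" "(1::nat)+1 = 2" by simp_all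
      have "0 \<le> (\<integral>t. (1/(y-t))^3 \<partial>M) - 2 * (H y / G y) * (\<integral>t. (1/(y-t))^2 \<partial>M) + (H y / G y)^2 * (\<integral>t. (1/(y-t))^1 \<partial>M)"
        using quad[OF ae that, of 1 "H y / G y"] by (simp only: e)
      thus ?thesis unfolding I1[symmetric] I2[symmetric] I3[symmetric] .
    qed
    also have "\<dots> = K y - H y ^ 2 / G y" using Gpos[OF that] by (simp add: field_simps power2_eq_square)
    finally have "H y ^ 2 / G y \<le> K y" by simp
    thus ?thesis using Gpos[OF that] by (simp add: field_simps mult.commute)
  qed
  have dG: "(G has_field_derivative - H x) (at x)" if "b < x" for x
  proof -
    define \<delta> where "\<delta> = (x - b)/2"
    have \<delta>: "0 < \<delta>" using that unfolding \<delta>_def by simp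
    have "((\<lambda>y. \<integral>t. 1/(y-t) \<partial>M) has_field_derivative (\<integral>t. -(1/(x-t)^2) \<partial>M)) (at x)"
    proof (rule deriv_int[OF ae that \<delta>, where C="1/\<delta>^3"])
      show "(\<lambda>t. 1/(y-t)) \<in> borel_measurable M" for y by measurable
      show "integrable M (\<lambda>t. 1/(y-t))" if "\<bar>y - x\<bar> < \<delta>" for y
      proof -
        have "x - y < (x-b)/2" using that abs_ge_minus_self[of "y-x"] unfolding \<delta>_def by linarith
        hence "b < y" using \<open>b<x\<close> by (simp add: field_simps)
        thus ?thesis using int_pow[OF ae, of y 1] by simp
      qed
      show "integrable M (\<lambda>t. -(1/(x-t)^2))"
        using int_pow[OF ae \<open>b<x\<close>, of 2] by (simp add: power_one_over)
      show "\<bar>1/(y-t) - 1/(x-t) - -(1/(x-t)^2) * (y - x)\<bar> \<le> 1/\<delta>^3 * (y-x)^2"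
        if "\<bar>y - x\<bar> < \<delta>" "t \<le> b" for y t
      proof -
        have h2: "x - b = 2 * \<delta>" unfolding \<delta>_def by simp
        have "x - y < \<delta>" using that(1) abs_ge_minus_self[of "y-x"] by linarith
        hence v: "\<delta> \<le> y - t" "\<delta> \<le> x - t" using that(2) h2 \<delta> by linarith+
        have "(y - t) - (x - t) = y - x" by simp
        thus ?thesis using alg1[OF \<delta> v(2) v(1)] by simp
      qed
    qed
    moreover have "(\<lambda>y. \<integral>t. 1/(y-t) \<partial>M) = G" unfolding G_def cauchy_transform_def ..
    moreover have "(\<integral>t. -(1/(x-t)^2) \<partial>M) = - H x" unfolding H_def by simp
    ultimately show ?thesis by simp
  qed
  have dH: "(H has_field_derivative - (2 * K x)) (at x)" if "b < x" for x
  proof -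
    define \<delta> where "\<delta> = (x - b)/2"
    have \<delta>: "0 < \<delta>" using that unfolding \<delta>_def by simp
    have "((\<lambda>y. \<integral>t. 1/(y-t)^2 \<partial>M) has_field_derivative (\<integral>t. -(2*(1/(x-t)^3)) \<partial>M)) (at x)"
    proof (rule deriv_int[OF ae that \<delta>, where C="3/\<delta>^4"])
      show "(\<lambda>t. 1/(y-t)^2) \<in> borel_measurable M" for y by measurable
      show "integrable M (\<lambda>t. 1/(y-t)^2)" if "\<bar>y - x\<bar> < \<delta>" for y
      proof -
        have "x - y < (x-b)/2" using that abs_ge_minus_self[of "y-x"] unfolding \<delta>_def by linarith
        hence "b < y" using \<open>b<x\<close> by (simp add: field_simps)
        thus ?thesis using int_pow[OF ae, of y 2] by (simp add: power_one_over)
      qed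
      have i3: "integrable M (\<lambda>t. 1/(x-t)^3)" using int_pow[OF ae \<open>b<x\<close>, of 3] by (simp add: power_one_over)
      show "integrable M (\<lambda>t. -(2*(1/(x-t)^3)))"
        by (intro integrable_minus integrable_mult_right i3)
      show "\<bar>1/(y-t)^2 - 1/(x-t)^2 - -(2*(1/(x-t)^3)) * (y - x)\<bar> \<le> 3/\<delta>^4 * (y-x)^2"
        if "\<bar>y - x\<bar> < \<delta>" "t \<le> b" for y t
      proof -
        have h2: "x - b = 2 * \<delta>" unfolding \<delta>_def by simp
        have "x - y < \<delta>" using that(1) abs_ge_minus_self[of "y-x"] by linarith
        hence v: "\<delta> \<le> y - t" "\<delta> \<le> x - t" using that(2) h2 \<delta> by linarith+
        have "(y - t) - (x - t) = y - x" by simp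
        thus ?thesis using alg2[OF \<delta> v(2) v(1)] by simp
      qed
    qed
    moreover have "(\<integral>t. -(2*(1/(x-t)^3)) \<partial>M) = - (2 * K x)" unfolding K_def by (simp only: integral_minus integral_mult_right_zero)
    ultimately show ?thesis unfolding H_def by simp
  qed
  define \<psi> where "\<psi> = (\<lambda>x. G x ^ 2 / (- H x))"
  have \<Phi>\<psi>: "\<Phi> x = \<psi> x" if "b < x" for x
    unfolding \<Phi>_def \<psi>_def G_def[symmetric] using DERIV_imp_deriv[OF dG[OF that]] by simp
  have cont: "continuous_on {b<..} \<psi>"
  proof (subst continuous_on_eq_continuous_at[OF open_greaterThan], intro ballI)
    fix x assume "x \<in> {b<..}"
    hence x: "b < x" by simp
    have "isCont G x" using DERIV_isCont[OF dG[OF x]] .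
    moreover have "isCont H x" using DERIV_isCont[OF dH[OF x]] .
    ultimately show "isCont \<psi> x" unfolding \<psi>_def using Hpos[OF x]
      by (auto intro!: continuous_intros)
  qed
  have mono: "\<psi> y \<le> \<psi> x" if "b < x" "x \<le> y" for x y
  proof (rule DERIV_nonpos_imp_nonincreasing[OF that(2)])
    fix z assume z: "x \<le> z" "z \<le> y"
    hence bz: "b < z" using that by simp
    have d: "(\<psi> has_field_derivative
        ((of_nat 2 * (- H z * G z ^ (2 - Suc 0))) * (- H z) - G z ^ 2 * (- (- (2 * K z)))) / ((- H z) * (- H z))) (at z)"
    proof -
      have dG2: "((\<lambda>x. G x ^ 2) has_field_derivative (of_nat 2 * (- H z * G z ^ (2 - Suc 0)))) (at z)"
        by (rule DERIV_power[OF dG[OF bz]])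
      show ?thesis unfolding \<psi>_def
        by (rule DERIV_divide[OF dG2 DERIV_minus[OF dH[OF bz]]]) (use Hpos[OF bz] in simp)
    qed
    have "(of_nat 2 * (- H z * G z ^ (2 - Suc 0))) * (- H z) - G z ^ 2 * (- (- (2 * K z)))
          = 2 * G z * (H z ^ 2 - G z * K z)"
      by (simp add: power2_eq_square algebra_simps)
    also have "\<dots> \<le> 0" using Gpos[OF bz] CS2[OF bz]
      by (intro mult_nonneg_nonpos) auto
    finally have "((of_nat 2 * (- H z * G z ^ (2 - Suc 0))) * (- H z) - G z ^ 2 * (- (- (2 * K z)))) / ((- H z) * (- H z)) \<le> 0"
      by (intro divide_nonpos_nonneg) auto
    thus "\<exists>D. (\<psi> has_field_derivative D) (at z) \<and> D \<le> 0" using d by blast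
  qed
  have vals: "\<psi> x \<in> {-1..0}" if "b < x" for x
  proof -
    have h: "0 < H x" using Hpos[OF that] .
    have "G x ^ 2 / H x \<le> 1" using CS1[OF that] h by simp
    moreover have "0 \<le> G x ^ 2 / H x" using h by simp
    ultimately show ?thesis unfolding \<psi>_def by simp
  qed
  show ?thesis
  proof (intro conjI ballI impI)
    show "continuous_on {b<..} \<Phi>"
      using cont by (rule continuous_on_cong[THEN iffD2, rotated 2]) (auto simp: \<Phi>\<psi>)
  next
    fix x y assume "x \<in> {b<..}" "y \<in> {b<..}" "x \<le> y"
    thus "\<Phi> y \<le> \<Phi> x" using mono[of x y] \<Phi>\<psi> by simp
  next
    fix x assume "x \<in> {b<..}"
    thus "\<Phi> x \<in> {-1..0}" using vals \<Phi>\<psi> by simp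
  qed
qed

end
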